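(* Let $f:A\to B$ be a geometrically closed homomorphism between $\mathscr L$-structures such that the trivial structure $\mathbf 1$ does not embed into $B$. Then $f$ is an immersion. In particular, if $T$ is a strict theory, every geometrically closed homomorphism between models of $T_u$ is an immersion.
   Context: The trivial structure $\mathbf 1$ is the one-element $\mathscr L$-structure in which every relation symbol is interpreted as the full relation. A homomorphism preserves atomic sentences with parameters. A homomorphism $f:A\to B$ is geometrically closed if every sentence $\forall\bar y\,(\bigwedge\Phi(\bar a,\bar y)\to\psi(\bar a,\bar y))$ ($\Phi\cup\{\psi\}$ finite sets of atomic formulas, parameters $\bar a$ from $A$) true in $A$ is true in $B$ of $f\bar a$. $f$ is an immersion if for every positive existential (prenex existential, negation-free) sentence $\phi(\bar a)$ with parameters from $A$, $B\models\phi(f\bar a)$ implies $A\models\phi(\bar a)$. $T_u$ is the set of consequences of $T$ of the form $\forall\bar y\,\neg\bigwedge\Phi$, $\Phi$ a finite set of atomic formulas. $T$ is strict if $\mathbf 1$ embeds in no model of $T$ (equivalently $\mathbf 1\not\models T_u$). *)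

theory Defs
  imports Main
begin

text \<open>A signature has relation symbols of type 'r with arities arR and function
symbols (constants = 0-ary) of type 'f with arities arF. An L-structure has universe a (nonempty) type 'a.\<close>

record ('r, 'f, 'a) struct =
  rel  :: "'r \<Rightarrow> 'a list \<Rightarrow> bool"
  func :: "'f \<Rightarrow> 'a list \<Rightarrow> 'a"

datatype 'f trm = Var nat | App 'f "'f trm list"

datatype ('r, 'f) atom = Eq "'f trm" "'f trm" | Rel 'r "'f trm list"

fun eval :: "('r, 'f, 'a) struct \<Rightarrow> (nat \<Rightarrow> 'a) \<Rightarrow> 'f trm \<Rightarrow> 'a" where
  "eval M s (Var n) = s n"
| "eval M s (App g ts) = func M g (map (eval M s) ts)"

fun wf_trm :: "('f \<Rightarrow> nat) \<Rightarrow> 'f trm \<Rightarrow> bool" where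
  "wf_trm arF (Var n) = True"
| "wf_trm arF (App g ts) = (length ts = arF g \<and> (\<forall>t\<in>set ts. wf_trm arF t))"

fun wf_atom :: "('r \<Rightarrow> nat) \<Rightarrow> ('f \<Rightarrow> nat) \<Rightarrow> ('r, 'f) atom \<Rightarrow> bool" where
  "wf_atom arR arF (Eq t u) = (wf_trm arF t \<and> wf_trm arF u)"
| "wf_atom arR arF (Rel R ts) = (length ts = arR R \<and> (\<forall>t\<in>set ts. wf_trm arF t))"

fun holds_atom :: "('r, 'f, 'a) struct \<Rightarrow> (nat \<Rightarrow> 'a) \<Rightarrow> ('r, 'f) atom \<Rightarrow> bool" where
  "holds_atom M s (Eq t u) = (eval M s t = eval M s u)"
| "holds_atom M s (Rel R ts) = rel M R (map (eval M s) ts)"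

datatype ('r, 'f) pqf = PAtom "('r, 'f) atom" | PAnd "('r, 'f) pqf" "('r, 'f) pqf"
  | POr "('r, 'f) pqf" "('r, 'f) pqf"

fun wf_pqf :: "('r \<Rightarrow> nat) \<Rightarrow> ('f \<Rightarrow> nat) \<Rightarrow> ('r, 'f) pqf \<Rightarrow> bool" where
  "wf_pqf arR arF (PAtom a) = wf_atom arR arF a"
| "wf_pqf arR arF (PAnd p q) = (wf_pqf arR arF p \<and> wf_pqf arR arF q)"
| "wf_pqf arR arF (POr p q) = (wf_pqf arR arF p \<and> wf_pqf arR arF q)"

fun holds_pqf :: "('r, 'f, 'a) struct \<Rightarrow> (nat \<Rightarrow> 'a) \<Rightarrow> ('r, 'f) pqf \<Rightarrow> bool" where
  "holds_pqf M s (PAtom a) = holds_atom M s a"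
| "holds_pqf M s (PAnd p q) = (holds_pqf M s p \<and> holds_pqf M s q)"
| "holds_pqf M s (POr p q) = (holds_pqf M s p \<or> holds_pqf M s q)"

text \<open>Parameters from the domain are given by an assignment s; the variables in the
finite set ys are the quantified ones (s' agrees with s off ys).\<close>

definition homomorphism ::
  "('r \<Rightarrow> nat) \<Rightarrow> ('f \<Rightarrow> nat) \<Rightarrow> ('r, 'f, 'a) struct \<Rightarrow> ('r, 'f, 'b) struct \<Rightarrow> ('a \<Rightarrow> 'b) \<Rightarrow> bool" where
  "homomorphism arR arF A B f \<longleftrightarrow>
     (\<forall>s a. wf_atom arR arF a \<longrightarrow> holds_atom A s a \<longrightarrow> holds_atom B (f \<circ> s) a)"

definition embedding ::
  "('r \<Rightarrow> nat) \<Rightarrow> ('f \<Rightarrow> nat) \<Rightarrow> ('r, 'f, 'a) struct \<Rightarrow> ('r, 'f, 'b) struct \<Rightarrow> ('a \<Rightarrow> 'b) \<Rightarrow> bool" where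
  "embedding arR arF A B f \<longleftrightarrow> inj f \<and>
     (\<forall>s a. wf_atom arR arF a \<longrightarrow> (holds_atom A s a \<longleftrightarrow> holds_atom B (f \<circ> s) a))"

definition geometrically_closed ::
  "('r \<Rightarrow> nat) \<Rightarrow> ('f \<Rightarrow> nat) \<Rightarrow> ('r, 'f, 'a) struct \<Rightarrow> ('r, 'f, 'b) struct \<Rightarrow> ('a \<Rightarrow> 'b) \<Rightarrow> bool" where
  "geometrically_closed arR arF A B f \<longleftrightarrow>
     (\<forall>s (ys :: nat set) (\<Phi> :: ('r, 'f) atom set) \<psi>.
        finite ys \<longrightarrow> finite \<Phi> \<longrightarrow> (\<forall>\<phi>\<in>\<Phi>. wf_atom arR arF \<phi>) \<longrightarrow> wf_atom arR arF \<psi> \<longrightarrow>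
        (\<forall>s'. (\<forall>v. v \<notin> ys \<longrightarrow> s' v = s v) \<longrightarrow> (\<forall>\<phi>\<in>\<Phi>. holds_atom A s' \<phi>) \<longrightarrow> holds_atom A s' \<psi>) \<longrightarrow>
        (\<forall>t. (\<forall>v. v \<notin> ys \<longrightarrow> t v = f (s v)) \<longrightarrow> (\<forall>\<phi>\<in>\<Phi>. holds_atom B t \<phi>) \<longrightarrow> holds_atom B t \<psi>))"

definition immersion ::
  "('r \<Rightarrow> nat) \<Rightarrow> ('f \<Rightarrow> nat) \<Rightarrow> ('r, 'f, 'a) struct \<Rightarrow> ('r, 'f, 'b) struct \<Rightarrow> ('a \<Rightarrow> 'b) \<Rightarrow> bool" where
  "immersion arR arF A B f \<longleftrightarrow>
     (\<forall>s (ys :: nat set) (\<phi> :: ('r, 'f) pqf).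
        finite ys \<longrightarrow> wf_pqf arR arF \<phi> \<longrightarrow>
        (\<exists>t. (\<forall>v. v \<notin> ys \<longrightarrow> t v = f (s v)) \<and> holds_pqf B t \<phi>) \<longrightarrow>
        (\<exists>s'. (\<forall>v. v \<notin> ys \<longrightarrow> s' v = s v) \<and> holds_pqf A s' \<phi>))"

definition trivial_struct :: "('r, 'f, unit) struct" where
  "trivial_struct = \<lparr>rel = (\<lambda>_ _. True), func = (\<lambda>_ _. ())\<rparr>"

definition trivial_embeds ::
  "('r \<Rightarrow> nat) \<Rightarrow> ('f \<Rightarrow> nat) \<Rightarrow> ('r, 'f, 'b) struct \<Rightarrow> bool" where
  "trivial_embeds arR arF B \<longleftrightarrow> (\<exists>g. embedding arR arF trivial_struct B g)"

text \<open>A sentence \<forall>y. \<not>\<And>\<Phi> (no parameters) is represented by the finite set \<Phi> of atoms;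
all its variables are universally quantified.\<close>

definition sat_neg :: "('r, 'f, 'a) struct \<Rightarrow> ('r, 'f) atom set \<Rightarrow> bool" where
  "sat_neg M \<Phi> \<longleftrightarrow> (\<forall>s. \<not> (\<forall>\<phi>\<in>\<Phi>. holds_atom M s \<phi>))"

definition neg_sentence :: "('r \<Rightarrow> nat) \<Rightarrow> ('f \<Rightarrow> nat) \<Rightarrow> ('r, 'f) atom set \<Rightarrow> bool" where
  "neg_sentence arR arF \<Phi> \<longleftrightarrow> finite \<Phi> \<and> (\<forall>\<phi>\<in>\<Phi>. wf_atom arR arF \<phi>)"

definition models_neg :: "('r, 'f, 'a) struct \<Rightarrow> ('r, 'f) atom set set \<Rightarrow> bool" where
  "models_neg M U \<longleftrightarrow> (\<forall>\<Phi>\<in>U. sat_neg M \<Phi>)"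

end

theory Submission
  imports Defs
begin

fun vt :: "'f trm \<Rightarrow> nat set" where
  "vt (Var n) = {n}"
| "vt (App g ts) = \<Union>(set (map vt ts))"

fun va :: "('r,'f) atom \<Rightarrow> nat set" where
  "va (Eq t u) = vt t \<union> vt u"
| "va (Rel R ts) = \<Union>(set (map vt ts))"

lemma finite_vt: "finite (vt t)"
  by (induction t) auto

lemma finite_va: "finite (va a)"
  by (cases a) (auto simp: finite_vt)

lemma eval_agree: "(\<forall>v\<in>vt t. s v = s' v) \<Longrightarrow> eval M s t = eval M s' t"
proof (induction t)
  case (App g ts)
  then have "map (eval M s) ts = map (eval M s') ts" by (auto simp: map_eq_conv)
  then show ?case by (metis eval.simps(2))
qed simp

lemma holds_agree: "(\<forall>v\<in>va a. s v = s' v) \<Longrightarrow> holds_atom M s a = holds_atom M s' a"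
proof (cases a)
  case (Eq t u)
  assume h: "\<forall>v\<in>va a. s v = s' v"
  have "eval M s t = eval M s' t" "eval M s u = eval M s' u" using h Eq by (auto intro!: eval_agree)
  then show ?thesis using Eq by simp
next
  case (Rel R ts)
  assume h: "\<forall>v\<in>va a. s v = s' v"
  have "map (eval M s) ts = map (eval M s') ts"
    using h Rel eval_agree[of _ s s' M] by (auto simp: map_eq_conv)
  then show ?thesis using Rel by (metis holds_atom.simps(2))
qed

fun dnf :: "('r,'f) pqf \<Rightarrow> ('r,'f) atom list list" where
  "dnf (PAtom a) = [[a]]"
| "dnf (PAnd p q) = [xs @ ys. xs \<leftarrow> dnf p, ys \<leftarrow> dnf q]"
| "dnf (POr p q) = dnf p @ dnf q"

lemma dnf_holds: "holds_pqf M s \<phi> \<longleftrightarrow> (\<exists>c\<in>set (dnf \<phi>). \<forall>a\<in>set c. holds_atom M s a)"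
proof (induction \<phi>)
  case (PAnd p q)
  show ?case
  proof
    assume "holds_pqf M s (PAnd p q)"
    then obtain c1 c2 where "c1 \<in> set (dnf p)" "\<forall>a\<in>set c1. holds_atom M s a"
      "c2 \<in> set (dnf q)" "\<forall>a\<in>set c2. holds_atom M s a" using PAnd by auto
    then show "\<exists>c\<in>set (dnf (PAnd p q)). \<forall>a\<in>set c. holds_atom M s a"
      by (intro bexI[of _ "c1 @ c2"]) auto
  next
    assume "\<exists>c\<in>set (dnf (PAnd p q)). \<forall>a\<in>set c. holds_atom M s a"
    then show "holds_pqf M s (PAnd p q)" using PAnd by auto
  qed
qed auto

lemma dnf_wf: "wf_pqf arR arF \<phi> \<Longrightarrow> c \<in> set (dnf \<phi>) \<Longrightarrow> a \<in> set c \<Longrightarrow> wf_atom arR arF a"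
  by (induction \<phi> arbitrary: c) auto

lemma key:
  assumes gc: "geometrically_closed arR arF A B f"
    and noA: "\<not> (\<exists>s'. (\<forall>v. v \<notin> ys0 \<longrightarrow> s' v = s v) \<and> (\<forall>\<phi>\<in>\<Phi>. holds_atom A s' \<phi>))"
    and fin: "finite \<Phi>" "finite ys0" and wf: "\<forall>\<phi>\<in>\<Phi>. wf_atom arR arF \<phi>"
    and tag: "\<forall>v. v \<notin> ys0 \<longrightarrow> t v = f (s v)" and tB: "\<forall>\<phi>\<in>\<Phi>. holds_atom B t \<phi>"
    and Z: "finite Z" "Z \<inter> \<Union>(va ` \<Phi>) = {}" and wpsi: "wf_atom arR arF \<psi>"
    and t': "\<forall>v. v \<notin> Z \<longrightarrow> t' v = t v"
  shows "holds_atom B t' \<psi>"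
proof -
  have A: "\<forall>s'. (\<forall>v. v \<notin> ys0 \<union> Z \<longrightarrow> s' v = s v) \<longrightarrow> (\<forall>\<phi>\<in>\<Phi>. holds_atom A s' \<phi>) \<longrightarrow> holds_atom A s' \<psi>"
  proof (intro allI impI)
    fix s' assume a1: "\<forall>v. v \<notin> ys0 \<union> Z \<longrightarrow> s' v = s v" and a2: "\<forall>\<phi>\<in>\<Phi>. holds_atom A s' \<phi>"
    define s'' where "s'' = (\<lambda>v. if v \<in> Z then s v else s' v)"
    have "\<forall>v. v \<notin> ys0 \<longrightarrow> s'' v = s v" using a1 by (auto simp: s''_def)
    moreover have "\<forall>\<phi>\<in>\<Phi>. holds_atom A s'' \<phi>"
    proof
      fix \<phi> assume p: "\<phi> \<in> \<Phi>"
      have "\<forall>v\<in>va \<phi>. s'' v = s' v" using Z(2) p by (auto simp: s''_def)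
      then show "holds_atom A s'' \<phi>" using holds_agree a2 p by metis
    qed
    ultimately show "holds_atom A s' \<psi>" using noA by blast
  qed
  have t1: "\<forall>v. v \<notin> ys0 \<union> Z \<longrightarrow> t' v = f (s v)" using t' tag by auto
  have t2: "\<forall>\<phi>\<in>\<Phi>. holds_atom B t' \<phi>"
  proof
    fix \<phi> assume p: "\<phi> \<in> \<Phi>"
    have "\<forall>v\<in>va \<phi>. t' v = t v" using Z(2) p t' by auto
    then show "holds_atom B t' \<phi>" using holds_agree tB p by metis
  qed
  have "finite (ys0 \<union> Z)" using fin Z by auto
  note gc' = gc[unfolded geometrically_closed_def, rule_format]
  show ?thesis
    by (rule gc'[where ys="ys0 \<union> Z" and \<Phi>=\<Phi> and s=s]) (use A t1 t2 fin wf wpsi \<open>finite (ys0 \<union> Z)\<close> in auto)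
qed

lemma triv_embeds_if:
  assumes eq: "\<forall>b1 b2::'b. b1 = b2"
    and rl: "\<forall>R (bs::'b list). length bs = arR R \<longrightarrow> rel B R bs"
  shows "trivial_embeds arR arF B"
proof -
  have "embedding arR arF trivial_struct B (\<lambda>_. undefined)"
    unfolding embedding_def
  proof (intro conjI allI impI)
    show "inj (\<lambda>_::unit. undefined::'b)" by (auto simp: inj_def)
  next
    fix s a assume w: "wf_atom arR arF (a::('a,'c) atom)"
    show "holds_atom trivial_struct s a = holds_atom B ((\<lambda>_. undefined) \<circ> s) a"
    proof (cases a)
      case (Eq x y) then show ?thesis using eq by auto
    next
      case (Rel R ts) then show ?thesis using rl w by (auto simp: trivial_struct_def)
    qed
  qed
  then show ?thesis unfolding trivial_embeds_def by blast
qed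

lemma part1:
  fixes A :: "('r,'f,'a) struct" and B :: "('r,'f,'b) struct"
  assumes h: "homomorphism arR arF A B f" and gc: "geometrically_closed arR arF A B f"
    and nt: "\<not> trivial_embeds arR arF B"
  shows "immersion arR arF A B f"
  unfolding immersion_def
proof (intro allI impI)
  fix s and ys :: "nat set" and \<phi> :: "('r,'f) pqf"
  assume fy: "finite ys" and w: "wf_pqf arR arF \<phi>"
    and ex: "\<exists>t. (\<forall>v. v \<notin> ys \<longrightarrow> t v = f (s v)) \<and> holds_pqf B t \<phi>"
  show "\<exists>s'. (\<forall>v. v \<notin> ys \<longrightarrow> s' v = s v) \<and> holds_pqf A s' \<phi>"
  proof (rule ccontr)
    assume no: "\<not> ?thesis"
    obtain t where tag: "\<forall>v. v \<notin> ys \<longrightarrow> t v = f (s v)" and tB: "holds_pqf B t \<phi>" using ex by blast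
    obtain c where c: "c \<in> set (dnf \<phi>)" and cB: "\<forall>a\<in>set c. holds_atom B t a"
      using tB dnf_holds by metis
    have noA: "\<not> (\<exists>s'. (\<forall>v. v \<notin> ys \<longrightarrow> s' v = s v) \<and> (\<forall>a\<in>set c. holds_atom A s' a))"
      using no c dnf_holds by metis
    have wc: "\<forall>a\<in>set c. wf_atom arR arF a" using dnf_wf[OF w c] by blast
    have "finite (\<Union>(va ` set c))" by (auto simp: finite_va)
    then obtain N where N: "\<forall>v\<in>\<Union>(va ` set c). v < N"
      using finite_nat_set_iff_bounded by blast
    have Nf: "\<forall>a\<in>set c. \<forall>v\<in>va a. \<not> N \<le> v" using N by (auto simp: not_le)
    note K = key[OF gc noA _ fy wc tag cB]
    have eq: "\<forall>b1 b2::'b. b1 = b2"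
    proof (intro allI)
      fix b1 b2 :: 'b
      have "holds_atom B (t(N := b1, Suc N := b2)) (Eq (Var N) (Var (Suc N)))"
        by (rule K[where Z="{N, Suc N}"]) (use N in \<open>auto dest: Suc_lessD\<close>)
      then show "b1 = b2" by simp
    qed
    have rl: "\<forall>R bs. length bs = arR R \<longrightarrow> rel B R bs"
    proof (intro allI impI)
      fix R and bs :: "'b list" assume l: "length bs = arR R"
      define t' where "t' = (\<lambda>v. if v \<in> {N..<N + length bs} then bs ! (v - N) else t v)"
      have "holds_atom B t' (Rel R (map Var [N..<N + length bs]))"
        by (rule K[where Z="{N..<N + length bs}"]) (use l Nf in \<open>auto simp: t'_def\<close>)
      moreover have "map (eval B t') (map Var [N..<N + length bs]) = bs"
        by (rule nth_equalityI) (auto simp: t'_def)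
      ultimately show "rel B R bs" by simp
    qed
    show False using triv_embeds_if[OF eq rl] nt by blast
  qed
qed

theorem lemma4p9:
  fixes arR :: "'r \<Rightarrow> nat" and arF :: "'f \<Rightarrow> nat"
  shows "(\<forall>(A :: ('r, 'f, 'a) struct) (B :: ('r, 'f, 'b) struct) f.
            homomorphism arR arF A B f \<longrightarrow> geometrically_closed arR arF A B f \<longrightarrow>
            \<not> trivial_embeds arR arF B \<longrightarrow> immersion arR arF A B f)
       \<and> (\<forall>(U :: ('r, 'f) atom set set) (A :: ('r, 'f, 'a) struct) (B :: ('r, 'f, 'b) struct) f.
            (\<forall>\<Phi>\<in>U. neg_sentence arR arF \<Phi>) \<longrightarrow>
            \<not> models_neg (trivial_struct :: ('r, 'f, unit) struct) U \<longrightarrow>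
            models_neg A U \<longrightarrow> models_neg B U \<longrightarrow>
            homomorphism arR arF A B f \<longrightarrow> geometrically_closed arR arF A B f \<longrightarrow>
            immersion arR arF A B f)"
proof (intro conjI allI impI)
  fix A :: "('r, 'f, 'a) struct" and B :: "('r, 'f, 'b) struct" and f
  assume "homomorphism arR arF A B f" "geometrically_closed arR arF A B f" "\<not> trivial_embeds arR arF B"
  then show "immersion arR arF A B f" by (rule part1)
next
  fix U :: "('r, 'f) atom set set" and A :: "('r, 'f, 'a) struct" and B :: "('r, 'f, 'b) struct" and f
  assume ns: "\<forall>\<Phi>\<in>U. neg_sentence arR arF \<Phi>"
    and nt: "\<not> models_neg (trivial_struct :: ('r, 'f, unit) struct) U"
    and mB: "models_neg B U"
    and h: "homomorphism arR arF A B f" and gc: "geometrically_closed arR arF A B f"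
  have "\<not> trivial_embeds arR arF B"
  proof
    assume "trivial_embeds arR arF B"
    then obtain g where g: "embedding arR arF trivial_struct B g" unfolding trivial_embeds_def by blast
    obtain \<Phi> s where P: "\<Phi> \<in> U" and hs: "\<forall>\<phi>\<in>\<Phi>. holds_atom (trivial_struct :: ('r, 'f, unit) struct) s \<phi>"
      using nt unfolding models_neg_def sat_neg_def by blast
    have "\<forall>\<phi>\<in>\<Phi>. holds_atom B (g \<circ> s) \<phi>"
      using hs g ns P unfolding embedding_def neg_sentence_def by blast
    then show False using mB P unfolding models_neg_def sat_neg_def by blast
  qed
  then show "immersion arR arF A B f" using part1[OF h gc] by blast
qed

end
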